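(* Let $A,B:[0,T]\to\mathrm{Sym}(n)$ be continuous with $B(t)$ positive definite and $A(t)$ negative semidefinite for all $t\in[0,T]$, and consider the natural quadratic Hamiltonian $H(t,p,q)=\frac12\big[\langle B(t)p,p\rangle+\langle A(t)q,q\rangle\big]$ on $[0,T]\times\mathbb R^{2n}$. Let $\psi$ be the fundamental solution of the linear Hamiltonian system $z'=J_0\nabla H(t,z)$, i.e. $\psi'=J_0\,\mathrm{diag}(B(t),A(t))\,\psi$, $\psi(0)=\mathrm{Id}$. Let $L_0\in\Lambda(n)$, $\ell(t)=\psi(t)L_0$ and $\mathrm{mul}(t_0)=\dim(\ell(t_0)\cap L_D)$. Then the set of $t_0\in[0,T]$ with $\mathrm{mul}(t_0)>0$ is finite and $$\sum_{t_0\in[0,T]}\mathrm{mul}(t_0)\le n.$$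
   Context: The standard symplectic space is $\mathbb R^{2n}=\mathbb R^n\oplus\mathbb R^n$ with coordinates $z=(p,q)$ ($p$ momentum, $q$ configuration), $\omega_0((p_1,q_1),(p_2,q_2))=\langle p_1,q_2\rangle-\langle q_1,p_2\rangle$, $J_0(p,q)=(-q,p)$ so that $z'=J_0\nabla H$ means $p'=-\nabla_qH$, $q'=\nabla_pH$; $\Lambda(n)$ is the Lagrangian Grassmannian and $L_D=\mathbb R^n\times\{0\}=\{(p,0):p\in\mathbb R^n\}$ is the Dirichlet Lagrangian. $\mathrm{Sym}(n)$ denotes real symmetric $n\times n$ matrices. *)

theory Defs
  imports "HOL-Analysis.Analysis"
begin

text \<open>Phase space R^{2n} = R^n x R^n with z = (p,q).\<close>

definition omega0 :: "((real^'n) \<times> (real^'n)) \<Rightarrow> ((real^'n) \<times> (real^'n)) \<Rightarrow> real" where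
  "omega0 z w = fst z \<bullet> snd w - snd z \<bullet> fst w"

definition J0 :: "((real^'n) \<times> (real^'n)) \<Rightarrow> ((real^'n) \<times> (real^'n))" where
  "J0 z = (- snd z, fst z)"

definition lagrangian :: "((real^'n) \<times> (real^'n)) set \<Rightarrow> bool" where
  "lagrangian L \<longleftrightarrow> subspace L \<and> dim L = CARD('n) \<and>
     (\<forall>z\<in>L. \<forall>w\<in>L. omega0 z w = 0)"

definition L_D :: "((real^'n) \<times> (real^'n)) set" where
  "L_D = {(p, 0) | p. True}"

definition symmetric_mat :: "real^'n^'n \<Rightarrow> bool" where
  "symmetric_mat M \<longleftrightarrow> transpose M = M"

definition pos_def :: "real^'n^'n \<Rightarrow> bool" where
  "pos_def M \<longleftrightarrow> (\<forall>x. x \<noteq> 0 \<longrightarrow> x \<bullet> (M *v x) > 0)"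

definition neg_semidef :: "real^'n^'n \<Rightarrow> bool" where
  "neg_semidef M \<longleftrightarrow> (\<forall>x. x \<bullet> (M *v x) \<le> 0)"

text \<open>Gradient of H(t,p,q) = 1/2 (<B p,p> + <A q,q>) for symmetric A, B:
  grad_p H = B p, grad_q H = A q.\<close>
definition gradH :: "(real \<Rightarrow> real^'n^'n) \<Rightarrow> (real \<Rightarrow> real^'n^'n) \<Rightarrow> real
    \<Rightarrow> ((real^'n) \<times> (real^'n)) \<Rightarrow> ((real^'n) \<times> (real^'n))" where
  "gradH A B t z = (B t *v fst z, A t *v snd z)"

end

theory Submission
  imports Defs
begin

lemma mv_inner_transpose:
  fixes M :: "real^'n^'n"
  shows "(M *v x) \<bullet> y = x \<bullet> (transpose M *v y)"
  unfolding matrix_vector_mult_def inner_vec_def transpose_def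
  apply (simp add: sum_distrib_left sum_distrib_right)
  apply (subst sum.swap)
  apply (simp add: mult_ac)
  done

lemma deriv_bil:
  fixes f g :: "real \<Rightarrow> (real^'n) \<times> (real^'n)"
  assumes f: "(f has_vector_derivative (a,b)) (at t within S)"
    and g: "(g has_vector_derivative (c,d)) (at t within S)"
  shows "((\<lambda>s. fst (f s) \<bullet> snd (g s)) has_real_derivative (a \<bullet> snd (g t) + fst (f t) \<bullet> d)) (at t within S)"
proof -
  have f1: "((\<lambda>s. fst (f s)) has_derivative (\<lambda>h. h *\<^sub>R a)) (at t within S)"
    using bounded_linear.has_derivative[OF bounded_linear_fst f[unfolded has_vector_derivative_def]] by simp
  have g1: "((\<lambda>s. snd (g s)) has_derivative (\<lambda>h. h *\<^sub>R d)) (at t within S)"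
    using bounded_linear.has_derivative[OF bounded_linear_snd g[unfolded has_vector_derivative_def]] by simp
  show ?thesis unfolding has_field_derivative_def
    using has_derivative_inner[OF f1 g1]
    by (rule has_derivative_eq_rhs) (auto simp: algebra_simps)
qed

lemma subspace_L_D: "subspace (L_D :: ((real^'n) \<times> (real^'n)) set)"
  unfolding subspace_def L_D_def by (auto simp: zero_prod_def)

theorem theorem3p9:
  fixes A B :: "real \<Rightarrow> real^'n^'n" and T :: real
    and \<psi> :: "real \<Rightarrow> ((real^'n) \<times> (real^'n)) \<Rightarrow> ((real^'n) \<times> (real^'n))"
    and L0 :: "((real^'n) \<times> (real^'n)) set"
  assumes contA: "continuous_on {0..T} A" and contB: "continuous_on {0..T} B"
    and symA: "\<And>t. t \<in> {0..T} \<Longrightarrow> symmetric_mat (A t)"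
    and symB: "\<And>t. t \<in> {0..T} \<Longrightarrow> symmetric_mat (B t)"
    and posB: "\<And>t. t \<in> {0..T} \<Longrightarrow> pos_def (B t)"
    and negA: "\<And>t. t \<in> {0..T} \<Longrightarrow> neg_semidef (A t)"
    and lin: "\<And>t. t \<in> {0..T} \<Longrightarrow> linear (\<psi> t)"
    and init: "\<psi> 0 = id"
    and ode: "\<And>t z. t \<in> {0..T} \<Longrightarrow>
       ((\<lambda>s. \<psi> s z) has_vector_derivative J0 (gradH A B t (\<psi> t z))) (at t within {0..T})"
    and L0: "lagrangian L0"
  shows "finite {t \<in> {0..T}. dim (\<psi> t ` L0 \<inter> L_D) > 0} \<and>
         (\<Sum>t \<in> {t \<in> {0..T}. dim (\<psi> t ` L0 \<inter> L_D) > 0}. dim (\<psi> t ` L0 \<inter> L_D)) \<le> CARD('n)"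
proof -
  have subL0: "subspace L0" and dimL0: "dim L0 = CARD('n)"
    and isoL0: "\<And>z w. z \<in> L0 \<Longrightarrow> w \<in> L0 \<Longrightarrow> omega0 z w = 0"
    using L0 unfolding lagrangian_def by auto
  have D: "((\<lambda>s. \<psi> s z) has_vector_derivative (- (A t *v snd (\<psi> t z)), B t *v fst (\<psi> t z))) (at t within {0..T})"
    if "t \<in> {0..T}" for t z
    using ode[OF that, of z] by (simp add: J0_def gradH_def)
  have symA': "(A t *v x) \<bullet> y = x \<bullet> (A t *v y)" if "t \<in> {0..T}" for t x y
    using symA[OF that] mv_inner_transpose[of "A t" x y] unfolding symmetric_mat_def by simp
  have symB': "(B t *v x) \<bullet> y = x \<bullet> (B t *v y)" if "t \<in> {0..T}" for t x y
    using symB[OF that] mv_inner_transpose[of "B t" x y] unfolding symmetric_mat_def by simp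
  have Om: "omega0 (\<psi> t u) (\<psi> t v) = omega0 u v" if t: "t \<in> {0..T}" for t u v
  proof -
    define h where "h s = fst (\<psi> s u) \<bullet> snd (\<psi> s v) - fst (\<psi> s v) \<bullet> snd (\<psi> s u)" for s
    have hom: "h s = omega0 (\<psi> s u) (\<psi> s v)" for s
      unfolding h_def omega0_def by (simp add: inner_commute)
    have "(h has_field_derivative 0) (at x within {0..T})" if x: "x \<in> {0..T}" for x
    proof -
      have "(h has_field_derivative
          ((- (A x *v snd (\<psi> x u))) \<bullet> snd (\<psi> x v) + fst (\<psi> x u) \<bullet> (B x *v fst (\<psi> x v))
          - ((- (A x *v snd (\<psi> x v))) \<bullet> snd (\<psi> x u) + fst (\<psi> x v) \<bullet> (B x *v fst (\<psi> x u)))))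
          (at x within {0..T})"
        unfolding h_def by (intro DERIV_diff deriv_bil[OF D[OF x] D[OF x]])
      moreover have "(- (A x *v snd (\<psi> x u))) \<bullet> snd (\<psi> x v) + fst (\<psi> x u) \<bullet> (B x *v fst (\<psi> x v))
          - ((- (A x *v snd (\<psi> x v))) \<bullet> snd (\<psi> x u) + fst (\<psi> x v) \<bullet> (B x *v fst (\<psi> x u))) = 0"
        using symA'[OF x, of "snd (\<psi> x u)" "snd (\<psi> x v)"] symB'[OF x, of "fst (\<psi> x v)" "fst (\<psi> x u)"]
        by (simp add: inner_commute)
      ultimately show ?thesis by simp
    qed
    then obtain c where c: "\<forall>x\<in>{0..T}. h x = c"
      using has_field_derivative_zero_constant[of "{0..T}" h] by auto
    have "0 \<in> {0..T}" using t by auto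
    then have "h t = h 0" using c t by auto
    then show ?thesis using init by (simp add: hom)
  qed
  have Inj: "w = 0" if t: "t \<in> {0..T}" and z: "\<psi> t w = 0" for t w
  proof -
    have "omega0 w (- snd w, fst w) = omega0 (\<psi> t w) (\<psi> t (- snd w, fst w))" using Om[OF t] by simp
    also have "\<dots> = 0" using z by (simp add: omega0_def)
    finally have "fst w \<bullet> fst w + snd w \<bullet> snd w = 0" by (simp add: omega0_def)
    then have "fst w = 0 \<and> snd w = 0"
      by (metis add_nonneg_eq_0_iff inner_eq_zero_iff inner_ge_zero)
    then show ?thesis by (simp add: prod_eq_iff)
  qed
  define Phi where "Phi t w = fst (\<psi> t w) \<bullet> snd (\<psi> t w)" for t w
  have DPhi: "((\<lambda>s. Phi s w) has_field_derivative
        ((- (A x *v snd (\<psi> x w))) \<bullet> snd (\<psi> x w) + fst (\<psi> x w) \<bullet> (B x *v fst (\<psi> x w))))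
        (at x within {0..T})" if x: "x \<in> {0..T}" for x w
    unfolding Phi_def by (rule deriv_bil[OF D[OF x] D[OF x]])
  have Dnn: "0 \<le> (- (A x *v snd (\<psi> x w))) \<bullet> snd (\<psi> x w) + fst (\<psi> x w) \<bullet> (B x *v fst (\<psi> x w))"
    if x: "x \<in> {0..T}" for x w
  proof -
    have "snd (\<psi> x w) \<bullet> (A x *v snd (\<psi> x w)) \<le> 0" using negA[OF x] unfolding neg_semidef_def by auto
    moreover have "0 \<le> fst (\<psi> x w) \<bullet> (B x *v fst (\<psi> x w))"
      using posB[OF x] unfolding pos_def_def
      by (cases "fst (\<psi> x w) = 0") (auto intro: less_imp_le)
    ultimately show ?thesis by (simp add: inner_commute)
  qed
  have Mono: "Phi t w \<le> Phi s w" if "t \<in> {0..T}" "s \<in> {0..T}" "t \<le> s" for t s w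
  proof (rule DERIV_nonneg_imp_increasing_open[OF \<open>t \<le> s\<close>])
    fix x assume "t < x" "x < s"
    then have xi: "x \<in> interior {0..T}" using that by auto
    then have x: "x \<in> {0..T}" using interior_subset by blast
    show "\<exists>y. ((\<lambda>s. Phi s w) has_real_derivative y) (at x) \<and> 0 \<le> y"
      using DPhi[OF x, of w] Dnn[OF x, of w] at_within_interior[OF xi] by auto
  next
    have "continuous_on {0..T} (\<lambda>s. Phi s w)"
      by (rule DERIV_continuous_on[OF DPhi])
    then show "continuous_on {t..s} (\<lambda>s. Phi s w)"
      by (rule continuous_on_subset) (use that in auto)
  qed

  have Pos: "0 < Phi s w" if b: "b \<in> {0..T}" and s: "s \<in> {0..T}" and bs: "b < s"
    and wD: "\<psi> b w \<in> L_D" and w0: "w \<noteq> 0" for b s w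
  proof -
    obtain p where p: "\<psi> b w = (p, 0)" using wD unfolding L_D_def by auto
    have "p \<noteq> 0" using Inj[OF b, of w] w0 p by (auto simp: zero_prod_def)
    then have pp: "0 < p \<bullet> (B b *v p)" using posB[OF b] unfolding pos_def_def by auto
    have Phib: "Phi b w = 0" using p unfolding Phi_def by simp
    have "((\<lambda>s. Phi s w) has_field_derivative p \<bullet> (B b *v p)) (at b within {0..T})"
      using DPhi[OF b, of w] p by simp
    then have "((\<lambda>s. Phi s w) has_field_derivative p \<bullet> (B b *v p)) (at b within {b..s})"
      by (rule DERIV_subset) (use b s in auto)
    then have "((\<lambda>y. (Phi y w - Phi b w) / (y - b)) \<longlongrightarrow> p \<bullet> (B b *v p)) (at_right b)"
      unfolding has_field_derivative_iff at_within_Icc_at_right[OF bs] .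
    then have ev1: "eventually (\<lambda>y. 0 < (Phi y w - Phi b w) / (y - b)) (at_right b)"
      using pp order_tendstoD(1) by blast
    have ev2: "eventually (\<lambda>y. y \<in> {b<..<s}) (at_right b)" using eventually_at_right_real[OF bs] .
    have "eventually (\<lambda>y. 0 < (Phi y w - Phi b w) / (y - b) \<and> y \<in> {b<..<s}) (at_right b)"
      using ev1 ev2 by (rule eventually_conj)
    then obtain y where y: "0 < (Phi y w - Phi b w) / (y - b)" "y \<in> {b<..<s}"
      using eventually_happens[of _ "at_right b"] trivial_limit_at_right_real by blast
    then have "0 < Phi y w" using Phib by (simp add: zero_less_divide_iff)
    also have "Phi y w \<le> Phi s w" using y b s by (intro Mono) auto
    finally show ?thesis .
  qed
  have sLD: "subspace (L_D :: ((real^'n) \<times> (real^'n)) set)"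
    unfolding subspace_def L_D_def by (auto simp: zero_prod_def)
  define W where "W t = {w \<in> L0. \<psi> t w \<in> L_D}" for t
  have subW: "subspace (W t)" if t: "t \<in> {0..T}" for t
  proof -
    have "W t = L0 \<inter> (\<psi> t -` L_D)" unfolding W_def by auto
    moreover have "subspace (\<psi> t -` L_D)"
      unfolding subspace_def
    proof (intro conjI ballI allI)
      show "0 \<in> \<psi> t -` L_D" unfolding vimage_def mem_Collect_eq
        by (subst linear_0[OF lin[OF t]]) (auto simp: L_D_def zero_prod_def)
    next
      fix x y assume "x \<in> \<psi> t -` L_D" "y \<in> \<psi> t -` L_D"
      then show "x + y \<in> \<psi> t -` L_D" using sLD lin[OF t]
        by (simp add: linear_add subspace_add)
    next
      fix c x assume "x \<in> \<psi> t -` L_D"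
      then show "c *\<^sub>R x \<in> \<psi> t -` L_D" using sLD lin[OF t]
        by (simp add: linear_scale subspace_scale)
    qed
    ultimately show ?thesis using subL0 by (simp add: subspace_inter)
  qed
  have WL0: "W t \<subseteq> L0" for t unfolding W_def by auto
  have PhiW: "Phi t c = 0" if "c \<in> W t" for t c
    using that unfolding W_def L_D_def Phi_def by auto
  have Sym: "Phi b (u + c) = Phi b u" if b: "b \<in> {0..T}" and u: "u \<in> L0" and c: "c \<in> W b" for b u c
  proof -
    obtain \<pi> where pi: "\<psi> b c = (\<pi>, 0)" using c unfolding W_def L_D_def by auto
    have cL: "c \<in> L0" using c unfolding W_def by auto
    have "omega0 (\<psi> b c) (\<psi> b u) = 0" using Om[OF b] isoL0[OF cL u] by simp
    then have o: "\<pi> \<bullet> snd (\<psi> b u) = 0" using pi by (simp add: omega0_def)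
    have "\<psi> b (u + c) = \<psi> b u + \<psi> b c" using lin[OF b] by (simp add: linear_add)
    then show ?thesis using pi o unfolding Phi_def by (simp add: inner_add_left)
  qed
  define U where "U S = span (\<Union> (W ` S))" for S
  have UL0: "U S \<subseteq> L0" for S
    unfolding U_def using WL0 subL0 by (intro span_minimal) auto
  have Ind: "(\<forall>w\<in>U S. w \<noteq> 0 \<longrightarrow> (\<forall>s\<in>{0..T}. (\<forall>t\<in>S. t < s) \<longrightarrow> 0 < Phi s w))
       \<and> dim (U S) = (\<Sum>t\<in>S. dim (W t))" if "finite S" "S \<subseteq> {0..T}" for S
    using that
  proof (induction S rule: finite_linorder_max_induct)
    case empty
    then show ?case unfolding U_def by simp
  next
    case (insert b S)
    have b: "b \<in> {0..T}" and S: "S \<subseteq> {0..T}" using insert.prems by auto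
    note IH = insert.IH[OF S]
    have bS: "b \<notin> S" using insert.hyps(2) by auto
    have Ueq: "U (insert b S) = {x + y | x y. x \<in> U S \<and> y \<in> W b}"
    proof -
      have "U (insert b S) = span (\<Union> (W ` S) \<union> W b)" unfolding U_def by (simp add: Un_commute)
      also have "\<dots> = {x + y | x y. x \<in> U S \<and> y \<in> span (W b)}" unfolding U_def by (rule span_Un)
      also have "span (W b) = W b" using subW[OF b] by (simp only: span_eq_iff)
      finally show ?thesis .
    qed
    have Int0: "U S \<inter> W b \<subseteq> {0}"
    proof
      fix w assume w: "w \<in> U S \<inter> W b"
      show "w \<in> {0}"
      proof (rule ccontr)
        assume "w \<notin> {0}"
        then have "0 < Phi b w" using IH w b insert.hyps(2) by auto
        then show False using PhiW w by auto
      qed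
    qed
    have d0: "dim (U S \<inter> W b) = 0"
      using dim_subset[OF Int0] by simp
    have dS: "dim (U (insert b S)) + dim (U S \<inter> W b) = dim (U S) + dim (W b)"
      unfolding Ueq by (rule dim_sums_Int) (auto simp: U_def subW[OF b])
    have dimeq: "dim (U (insert b S)) = (\<Sum>t\<in>insert b S. dim (W t))"
    proof -
      have "(\<Sum>t\<in>insert b S. dim (W t)) = dim (W b) + (\<Sum>t\<in>S. dim (W t))"
        using insert.hyps(1) bS by simp
      then show ?thesis using d0 dS IH by linarith
    qed
    have "0 < Phi s w" if w: "w \<in> U (insert b S)" "w \<noteq> 0" and s: "s \<in> {0..T}"
      and lt: "\<forall>t\<in>insert b S. t < s" for w s
    proof -
      obtain u c where uc: "w = u + c" "u \<in> U S" "c \<in> W b" using w(1) unfolding Ueq by auto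
      show ?thesis
      proof (cases "u = 0")
        case True
        then show ?thesis using Pos[OF b s _, of c] uc w lt unfolding W_def by auto
      next
        case False
        have "0 < Phi b u" using IH uc False b insert.hyps(2) by auto
        also have "\<dots> = Phi b w" using Sym[OF b _ uc(3), of u] uc UL0[of S] by auto
        also have "\<dots> \<le> Phi s w" using Mono[OF b s, of w] lt by auto
        finally show ?thesis .
      qed
    qed
    then show ?case using dimeq by blast
  qed
  define V where "V t = dim (\<psi> t ` L0 \<inter> L_D)" for t
  have VW: "V t \<le> dim (W t)" if t: "t \<in> {0..T}" for t
  proof -
    have "\<psi> t ` L0 \<inter> L_D = \<psi> t ` (W t)" unfolding W_def by auto
    then show ?thesis unfolding V_def using dim_image_le[OF lin[OF t]] by simp
  qed
  have bound: "(\<Sum>t\<in>S. V t) \<le> CARD('n)" if "finite S" "S \<subseteq> {0..T}" for S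
  proof -
    have "(\<Sum>t\<in>S. V t) \<le> (\<Sum>t\<in>S. dim (W t))" using VW that by (intro sum_mono) auto
    also have "\<dots> = dim (U S)" using Ind[OF that] by simp
    also have "\<dots> \<le> dim L0" using UL0 by (rule dim_subset)
    finally show ?thesis using dimL0 by simp
  qed
  define C where "C = {t \<in> {0..T}. 0 < V t}"
  have finC: "finite C"
  proof (rule ccontr)
    assume "infinite C"
    then obtain S where S: "finite S" "card S = Suc CARD('n)" "S \<subseteq> C"
      using infinite_arbitrarily_large by blast
    have "card S = (\<Sum>t\<in>S. 1::nat)" by simp
    also have "\<dots> \<le> (\<Sum>t\<in>S. V t)" using S unfolding C_def by (intro sum_mono) auto
    also have "\<dots> \<le> CARD('n)" using S unfolding C_def by (intro bound) auto
    finally show False using S by simp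
  qed
  have "(\<Sum>t\<in>C. V t) \<le> CARD('n)" using finC unfolding C_def by (intro bound) auto
  then show ?thesis using finC unfolding C_def V_def by simp
qed

end
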